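(* Let $q$ be a root of unity with $q^4\ne1$ and let $\rho$ be a type-$0$ representation with parameters $\sigma$ (general), $w$, $(\vec s,\vec t)\in E^0_{\sigma,w}$. (1) If $\Pi_s=\Pi_t=0$ and $r_i(\sigma,w)=r_j(\sigma,w)=0$ for some $i\neq j$ in $\mathbb Z/D$, then $\rho$ is reducible. (2) If moreover $z_0=\sigma^D+\sigma^{-D}\neq\pm2$, the converse holds: $\rho$ reducible implies $\Pi_s=\Pi_t=0$ and $r_i=r_j=0$ for some $i\ne j$.
   Context: $\mathcal S_q(\Sigma_{1,1})$ is the Kauffman bracket skein algebra of the one-punctured torus, generated by the slope $0,1,\infty$ curves $\alpha_0,\alpha_1,\alpha_\infty$. For $q$ a root of unity: $n=\mathrm{ord}(q^2)$, $D=n$. For $\sigma\in\mathbb C^\times$: $z_0=\sigma^D+\sigma^{-D}$, $\lambda_i=q^{2i}\sigma+q^{-2i}\sigma^{-1}$, $\hat\lambda_i=q^{2i}\sigma-q^{-2i}\sigma^{-1}$ ($i\in\mathbb Z/D$); $\sigma$ is general if $z_0\ne\pm2$ or ($z_0=-2$ and $n$ even). $r_i(\sigma,w)=\frac{w+q^{4i+2}\sigma^2+q^{-4i-2}\sigma^{-2}}{\hat\lambda_i\hat\lambda_{i+1}}$, $E^0_{\sigma,w}=\{(\vec s,\vec t)\in\mathbb C^{2D}:s_it_i=r_i(\sigma,w)\}$, $\Pi_s=\prod_i s_i$, $\Pi_t=\prod_it_i$. The type-$0$ representation: $V$ with basis $\{v_i\}_{i\in\mathbb Z/D}$, $\rho(\alpha_0)v_i=\lambda_iv_i$,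 $\rho(\alpha_1)v_i=q^{2i+1}\sigma s_iv_{i+1}+q^{-2i+1}\sigma^{-1}t_{i-1}v_{i-1}$, $\rho(\alpha_\infty)v_i=s_iv_{i+1}+t_{i-1}v_{i-1}$; this is a representation of $\mathcal S_q(\Sigma_{1,1})$. *)

theory Defs
  imports Complex_Main
begin

text \<open>Vectors of V = span of v_0..v_{D-1} are represented as functions nat => complex
  vanishing outside {..<D}; v_i is the i-th coordinate vector. Indices are read mod D.\<close>

definition root_of_unity :: "complex \<Rightarrow> bool" where
  "root_of_unity q \<longleftrightarrow> (\<exists>m::nat. m > 0 \<and> q ^ m = 1)"

definition ordD :: "complex \<Rightarrow> nat" where
  "ordD q = (LEAST k::nat. k > 0 \<and> (q^2) ^ k = 1)"

definition z0 :: "complex \<Rightarrow> complex \<Rightarrow> complex" where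
  "z0 q \<sigma> = \<sigma> ^ ordD q + inverse (\<sigma> ^ ordD q)"

definition lam :: "complex \<Rightarrow> complex \<Rightarrow> nat \<Rightarrow> complex" where
  "lam q \<sigma> i = q ^ (2*i) * \<sigma> + inverse (q ^ (2*i)) * inverse \<sigma>"

definition lamhat :: "complex \<Rightarrow> complex \<Rightarrow> nat \<Rightarrow> complex" where
  "lamhat q \<sigma> i = q ^ (2*i) * \<sigma> - inverse (q ^ (2*i)) * inverse \<sigma>"

definition general :: "complex \<Rightarrow> complex \<Rightarrow> bool" where
  "general q \<sigma> \<longleftrightarrow> (z0 q \<sigma> \<noteq> 2 \<and> z0 q \<sigma> \<noteq> -2) \<or> (z0 q \<sigma> = -2 \<and> even (ordD q))"

definition rr :: "complex \<Rightarrow> complex \<Rightarrow> complex \<Rightarrow> nat \<Rightarrow> complex" where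
  "rr q \<sigma> w i = (w + q ^ (4*i+2) * \<sigma>^2 + inverse (q ^ (4*i+2) * \<sigma>^2))
      / (lamhat q \<sigma> i * lamhat q \<sigma> (i+1))"

definition inE0 :: "complex \<Rightarrow> complex \<Rightarrow> complex \<Rightarrow> (nat \<Rightarrow> complex) \<Rightarrow> (nat \<Rightarrow> complex) \<Rightarrow> bool" where
  "inE0 q \<sigma> w s t \<longleftrightarrow> (\<forall>i < ordD q. s i * t i = rr q \<sigma> w i)"

definition Vsp :: "nat \<Rightarrow> (nat \<Rightarrow> complex) set" where
  "Vsp D = {f. \<forall>i. D \<le> i \<longrightarrow> f i = 0}"

definition bv :: "nat \<Rightarrow> nat \<Rightarrow> complex" where
  "bv i = (\<lambda>j. if j = i then 1 else 0)"

definition nxt :: "nat \<Rightarrow> nat \<Rightarrow> nat" where "nxt D i = (i + 1) mod D"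
definition prv :: "nat \<Rightarrow> nat \<Rightarrow> nat" where "prv D i = (i + D - 1) mod D"

definition linext :: "nat \<Rightarrow> (nat \<Rightarrow> nat \<Rightarrow> complex) \<Rightarrow> (nat \<Rightarrow> complex) \<Rightarrow> nat \<Rightarrow> complex" where
  "linext D img f = (\<lambda>j. \<Sum>i<D. f i * img i j)"

definition rho0 :: "complex \<Rightarrow> complex \<Rightarrow> (nat \<Rightarrow> complex) \<Rightarrow> nat \<Rightarrow> complex" where
  "rho0 q \<sigma> = linext (ordD q) (\<lambda>i j. lam q \<sigma> i * bv i j)"

definition rho1 :: "complex \<Rightarrow> complex \<Rightarrow> (nat \<Rightarrow> complex) \<Rightarrow> (nat \<Rightarrow> complex) \<Rightarrow> (nat \<Rightarrow> complex) \<Rightarrow> nat \<Rightarrow> complex" where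
  "rho1 q \<sigma> s t = linext (ordD q) (\<lambda>i j.
      q ^ (2*i+1) * \<sigma> * s i * bv (nxt (ordD q) i) j
      + q powi (1 - 2 * int i) * inverse \<sigma> * t (prv (ordD q) i) * bv (prv (ordD q) i) j)"

definition rhoinf :: "complex \<Rightarrow> (nat \<Rightarrow> complex) \<Rightarrow> (nat \<Rightarrow> complex) \<Rightarrow> (nat \<Rightarrow> complex) \<Rightarrow> nat \<Rightarrow> complex" where
  "rhoinf q s t = linext (ordD q) (\<lambda>i j.
      s i * bv (nxt (ordD q) i) j + t (prv (ordD q) i) * bv (prv (ordD q) i) j)"

definition lin_subspace :: "(nat \<Rightarrow> complex) set \<Rightarrow> bool" where
  "lin_subspace W \<longleftrightarrow> (\<lambda>_. 0) \<in> W \<and> (\<forall>f\<in>W. \<forall>g\<in>W. (\<lambda>j. f j + g j) \<in> W)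
      \<and> (\<forall>c. \<forall>f\<in>W. (\<lambda>j. c * f j) \<in> W)"

definition reducible_type0 :: "complex \<Rightarrow> complex \<Rightarrow> (nat \<Rightarrow> complex) \<Rightarrow> (nat \<Rightarrow> complex) \<Rightarrow> bool" where
  "reducible_type0 q \<sigma> s t \<longleftrightarrow> (\<exists>W. lin_subspace W \<and> W \<subseteq> Vsp (ordD q)
      \<and> W \<noteq> {\<lambda>_. 0} \<and> W \<noteq> Vsp (ordD q)
      \<and> (\<forall>f\<in>W. rho0 q \<sigma> f \<in> W \<and> rho1 q \<sigma> s t f \<in> W \<and> rhoinf q s t f \<in> W))"

end

theory Submission
  imports Defs
begin

lemma mod2: fixes x D :: nat assumes "x < 2*D" shows "x mod D = (if x < D then x else x - D)"
proof (cases "x < D")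
  case True then show ?thesis by simp
next
  case False then have "x mod D = (x - D) mod D" by (simp add: le_mod_geq)
  moreover have "x - D < D" using assms False by linarith
  ultimately show ?thesis using False by simp
qed

lemma ordD_props:
  assumes "root_of_unity q" "q ^ 4 \<noteq> 1"
  shows "q \<noteq> 0" "3 \<le> ordD q" "(q^2)^(ordD q) = 1" "\<And>k. 0 < k \<Longrightarrow> k < ordD q \<Longrightarrow> (q^2)^k \<noteq> 1"
proof -
  obtain m::nat where m: "m>0" "q^m = 1" using assms(1) unfolding root_of_unity_def by blast
  show "q \<noteq> 0" using m by (cases m) auto
  have "(q^2)^m = (q^m)^2" by (metis power_mult mult.commute)
  then have ex: "\<exists>k::nat. k > 0 \<and> (q^2)^k = 1" using m by auto
  have L: "ordD q > 0 \<and> (q^2)^(ordD q) = 1" unfolding ordD_def by (rule LeastI_ex[OF ex])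
  show "(q^2)^(ordD q) = 1" using L by simp
  show "(q^2)^k \<noteq> 1" if "0<k" "k < ordD q" for k
    using not_less_Least[of k "\<lambda>k. 0<k \<and> (q^2)^k = 1"] that unfolding ordD_def by auto
  have q4: "q^4 = (q^2)^2" by (metis power_mult mult_2 numeral_Bit0 numeral_One one_add_one)
  show "3 \<le> ordD q"
  proof (rule ccontr)
    assume "\<not> 3 \<le> ordD q"
    then have "ordD q = 1 \<or> ordD q = 2" using L by linarith
    then show False
    proof
      assume "ordD q = 1" then have h: "q^2 = 1" using L by (metis power_one_right)
      have "q^4 = 1" by (simp only: q4 h power_one)
      then show False using assms(2) by blast
    next
      assume "ordD q = 2" then have h: "(q^2)^2 = 1" using L by metis
      have "q^4 = 1" by (simp only: q4 h)
      then show False using assms(2) by blast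
    qed
  qed
qed

lemma pow_diff: "i \<le> j \<Longrightarrow> (x::complex)^(2*j) = x^(2*i) * (x^2)^(j-i)"
proof -
  assume "i \<le> j"
  then have "2*j = 2*i + 2*(j-i)" by simp
  then show ?thesis by (metis power_add power_mult)
qed

lemma lam_inj:
  assumes "q \<noteq> 0" "\<sigma> \<noteq> 0" "(q^2)^D = 1" "\<And>k. 0<k \<Longrightarrow> k<D \<Longrightarrow> (q^2)^k \<noteq> 1"
    "\<sigma>^D + inverse (\<sigma>^D) \<noteq> 2" "\<sigma>^D + inverse (\<sigma>^D) \<noteq> -2" "i<D" "j<D"
    "lam q \<sigma> i = lam q \<sigma> j"
  shows "i = j"
proof -
  define a where "a = q^(2*i) * \<sigma>"
  define b where "b = q^(2*j) * \<sigma>"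
  have a0: "a \<noteq> 0" and b0: "b \<noteq> 0" using assms(1,2) by (auto simp: a_def b_def)
  have e: "a + inverse a = b + inverse b" using assms(9) by (simp add: lam_def a_def b_def inverse_mult_distrib)
  have "(a-b)*(a*b-1) = a*b*((a + inverse a) - (b + inverse b))" using a0 b0 by (simp add: field_simps)
  then have "(a-b)*(a*b-1) = 0" using e by simp
  then have "a = b \<or> a*b = 1" by simp
  then show ?thesis
  proof
    assume "a = b"
    then have ab: "q^(2*i) = q^(2*j)" using assms(2) by (simp add: a_def b_def)
    show "i = j"
    proof (rule linorder_cases[of i j])
      assume "i < j"
      then have "q^(2*j) = q^(2*i) * (q^2)^(j-i)" by (simp add: pow_diff)
      then have "(q^2)^(j-i) = 1" using ab assms(1) by simp
      then show ?thesis using assms(4)[of "j-i"] \<open>i<j\<close> assms(8) by simp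
    next
      assume "j < i"
      then have "q^(2*i) = q^(2*j) * (q^2)^(i-j)" by (simp add: pow_diff)
      then have "(q^2)^(i-j) = 1" using ab assms(1) by simp
      then show ?thesis using assms(4)[of "i-j"] \<open>j<i\<close> assms(7) by simp
    qed simp
  next
    assume ab1: "a*b = 1"
    have "a*b = (q^2)^(i+j) * \<sigma>^2"
    proof -
      have "q^(2*i)*q^(2*j) = (q^2)^(i+j)"
        by (metis power_add power_mult distrib_left)
      then show ?thesis by (simp add: a_def b_def power2_eq_square algebra_simps)
    qed
    then have "1 = ((q^2)^(i+j))^D * (\<sigma>^D)^2" using ab1
      by (metis power_mult_distrib power_one power_mult mult.commute)
    also have "((q^2)^(i+j))^D = 1" using assms(3)
      by (metis power_mult power_one mult.commute)
    finally have "(\<sigma>^D)^2 = 1" by simp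
    then have "\<sigma>^D = 1 \<or> \<sigma>^D = -1" by (simp add: power2_eq_1_iff)
    then show ?thesis using assms(5,6) by auto
  qed
qed

lemma rho0_apply: "f \<in> Vsp (ordD q) \<Longrightarrow> rho0 q \<sigma> f = (\<lambda>m. f m * lam q \<sigma> m)"
  unfolding rho0_def linext_def Vsp_def bv_def
  by (rule ext) (auto simp: if_distrib cong: if_cong)

lemma ls_add: "lin_subspace W \<Longrightarrow> f \<in> W \<Longrightarrow> g \<in> W \<Longrightarrow> (\<lambda>j. f j + g j) \<in> W"
  unfolding lin_subspace_def by auto
lemma ls_smult: "lin_subspace W \<Longrightarrow> f \<in> W \<Longrightarrow> (\<lambda>j. c * f j) \<in> W"
  unfolding lin_subspace_def by auto

lemma ls_sum:
  assumes "lin_subspace W" "finite K" "\<forall>i\<in>K. g i \<in> W"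
  shows "(\<lambda>m. \<Sum>i\<in>K. c i * g i m) \<in> W"
  using assms(2,3)
proof induct
  case empty then show ?case using assms(1) by (simp add: lin_subspace_def)
next
  case (insert x F)
  then have "(\<lambda>m. \<Sum>i\<in>F. c i * g i m) \<in> W" "(\<lambda>m. c x * g x m) \<in> W"
    using assms(1) by (auto simp: lin_subspace_def)
  then have "(\<lambda>m. c x * g x m + (\<Sum>i\<in>F. c i * g i m)) \<in> W"
    using ls_add[OF assms(1)] by blast
  then show ?case using insert by simp
qed

lemma Vsp_decomp: "f \<in> Vsp D \<Longrightarrow> f = (\<lambda>m. \<Sum>i<D. f i * bv i m)"
  unfolding Vsp_def bv_def
  by (rule ext) (auto simp: if_distrib cong: if_cong)

lemma sep_prod:
  assumes ls: "lin_subspace W" and sub: "W \<subseteq> Vsp (ordD q)"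
    and inv: "\<forall>f\<in>W. rho0 q \<sigma> f \<in> W" and f: "f \<in> W" and K: "finite K"
  shows "(\<lambda>m. f m * (\<Prod>k\<in>K. (lam q \<sigma> m - lam q \<sigma> k))) \<in> W"
  using K
proof induct
  case empty then show ?case using f by simp
next
  case (insert x F)
  define g where "g = (\<lambda>m. f m * (\<Prod>k\<in>F. (lam q \<sigma> m - lam q \<sigma> k)))"
  have g: "g \<in> W" using insert g_def by simp
  then have "rho0 q \<sigma> g \<in> W" using inv by blast
  moreover have "rho0 q \<sigma> g = (\<lambda>m. g m * lam q \<sigma> m)" using g sub rho0_apply by blast
  ultimately have 1: "(\<lambda>m. g m * lam q \<sigma> m) \<in> W" by simp
  have 2: "(\<lambda>m. (- lam q \<sigma> x) * g m) \<in> W" using ls_smult[OF ls g] .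
  have "(\<lambda>m. g m * lam q \<sigma> m + (- lam q \<sigma> x) * g m) \<in> W"
    using ls_add[OF ls 1 2] .
  moreover have "(\<lambda>m. g m * lam q \<sigma> m + (- lam q \<sigma> x) * g m)
      = (\<lambda>m. f m * (\<Prod>k\<in>insert x F. (lam q \<sigma> m - lam q \<sigma> k)))"
  proof (rule ext)
    fix m
    have "(\<Prod>k\<in>insert x F. (lam q \<sigma> m - lam q \<sigma> k)) = (lam q \<sigma> m - lam q \<sigma> x) * (\<Prod>k\<in>F. (lam q \<sigma> m - lam q \<sigma> k))"
      using insert by simp
    then show "g m * lam q \<sigma> m + (- lam q \<sigma> x) * g m = f m * (\<Prod>k\<in>insert x F. (lam q \<sigma> m - lam q \<sigma> k))"
      unfolding g_def by algebra
  qed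
  ultimately show ?case by simp
qed

lemma sep:
  assumes ls: "lin_subspace W" and sub: "W \<subseteq> Vsp (ordD q)"
    and inv: "\<forall>f\<in>W. rho0 q \<sigma> f \<in> W" and f: "f \<in> W"
    and dist: "\<forall>i<ordD q. \<forall>j<ordD q. lam q \<sigma> i = lam q \<sigma> j \<longrightarrow> i = j"
    and j: "j < ordD q" "f j \<noteq> 0"
  shows "bv j \<in> W"
proof -
  define K where "K = {..<ordD q} - {j}"
  define h where "h = (\<lambda>m. f m * (\<Prod>k\<in>K. (lam q \<sigma> m - lam q \<sigma> k)))"
  have h: "h \<in> W" unfolding h_def K_def by (rule sep_prod[OF ls sub inv f]) simp
  define c where "c = f j * (\<Prod>k\<in>K. (lam q \<sigma> j - lam q \<sigma> k))"
  have "(\<Prod>k\<in>K. (lam q \<sigma> j - lam q \<sigma> k)) \<noteq> 0"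
  proof -
    have "\<forall>k\<in>K. lam q \<sigma> j - lam q \<sigma> k \<noteq> 0" using dist j(1) by (auto simp: K_def)
    then show ?thesis by (simp add: prod_zero_iff K_def)
  qed
  then have c0: "c \<noteq> 0" using j(2) by (simp add: c_def)
  have "(\<lambda>m. inverse c * h m) \<in> W" using ls_smult[OF ls h] .
  moreover have "(\<lambda>m. inverse c * h m) = bv j"
  proof
    fix m
    show "inverse c * h m = bv j m"
    proof (cases "m = j")
      case True
      have "h j = c" by (simp add: h_def c_def)
      then show ?thesis using c0 True by (simp add: bv_def)
    next
      case False
      show ?thesis
      proof (cases "m < ordD q")
        case True
        then have "m \<in> K" using False by (simp add: K_def)
        then have "(\<Prod>k\<in>K. (lam q \<sigma> m - lam q \<sigma> k)) = 0"
          by (intro prod_zero) (auto simp: K_def)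
        then show ?thesis using False by (simp add: h_def bv_def)
      next
        case F2: False
        have "f m = 0" using f sub F2 by (auto simp: Vsp_def)
        then show ?thesis using False by (simp add: h_def bv_def)
      qed
    qed
  qed
  ultimately show ?thesis by simp
qed

definition WS :: "nat \<Rightarrow> nat set \<Rightarrow> (nat \<Rightarrow> complex) set" where
  "WS D S = {f \<in> Vsp D. \<forall>m. m \<notin> S \<longrightarrow> f m = 0}"

lemma nxt_lt: "0 < D \<Longrightarrow> nxt D i < D" by (simp add: nxt_def)
lemma prv_lt: "0 < D \<Longrightarrow> prv D i < D" by (simp add: prv_def)

lemma linext_bv: "i < D \<Longrightarrow> linext D img (bv i) = img i"
  unfolding linext_def
proof (rule ext)
  fix j assume "i < D"
  have "(\<Sum>ia<D. bv i ia * img ia j) = (\<Sum>ia<D. if ia = i then img i j else 0)"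
    by (rule sum.cong) (auto simp: bv_def)
  then show "(\<Sum>ia<D. bv i ia * img ia j) = img i j" using \<open>i < D\<close> by simp
qed

lemma nxt_ne_prv: assumes "3 \<le> D" "i < D" shows "nxt D i \<noteq> prv D i"
proof -
  have a: "(i+1) mod D = (if i+1 < D then i+1 else i+1-D)" using assms by (intro mod2) auto
  have b: "(i+D-1) mod D = (if i+D-1 < D then i+D-1 else i+D-1-D)" using assms by (intro mod2) auto
  show ?thesis unfolding nxt_def prv_def a b using assms by auto
qed

lemma prv_nxt: assumes "0 < D" "i < D" shows "prv D (nxt D i) = i"
proof -
  have a: "(i+1) mod D = (if i+1 < D then i+1 else i+1-D)" using assms by (intro mod2) auto
  show ?thesis
  proof (cases "i+1 < D")
    case True
    then have "prv D (nxt D i) = (i + D) mod D" unfolding nxt_def prv_def a by simp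
    then show ?thesis using assms by simp
  next
    case False
    then have "i + 1 = D" using assms by linarith
    then have "nxt D i = 0" unfolding nxt_def by simp
    then show ?thesis using \<open>i + 1 = D\<close> unfolding prv_def by simp
  qed
qed

lemma rhoinf_bv: assumes "i < ordD q"
  shows "rhoinf q s t (bv i) = (\<lambda>j. s i * bv (nxt (ordD q) i) j + t (prv (ordD q) i) * bv (prv (ordD q) i) j)"
  unfolding rhoinf_def using linext_bv[OF assms] by simp

lemma WS_inv:
  assumes D: "0 < ordD q"
    and cl1: "\<And>i. i\<in>S \<Longrightarrow> s i \<noteq> 0 \<Longrightarrow> nxt (ordD q) i \<in> S"
    and cl2: "\<And>i. i\<in>S \<Longrightarrow> t (prv (ordD q) i) \<noteq> 0 \<Longrightarrow> prv (ordD q) i \<in> S"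
    and f: "f \<in> WS (ordD q) S"
  shows "rho0 q \<sigma> f \<in> WS (ordD q) S" "rho1 q \<sigma> s t f \<in> WS (ordD q) S" "rhoinf q s t f \<in> WS (ordD q) S"
proof -
  let ?D = "ordD q"
  have fS: "\<And>i. i \<notin> S \<Longrightarrow> f i = 0" and fD: "\<And>i. ?D \<le> i \<Longrightarrow> f i = 0"
    using f by (auto simp: WS_def Vsp_def)
  have bad: "\<And>j. ?D \<le> j \<or> j \<notin> S \<Longrightarrow> ?D \<le> j \<or> j \<notin> S" by simp
  have T0: "f i * (lam q \<sigma> i * bv i j) = 0" if "?D \<le> j \<or> j \<notin> S" for i j
    using that fS fD by (auto simp: bv_def)
  have Tinf: "f i * (s i * bv (nxt ?D i) j + t (prv ?D i) * bv (prv ?D i) j) = 0"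
    if "?D \<le> j \<or> j \<notin> S" for i j
  proof (cases "i \<in> S")
    case False then show ?thesis using fS by simp
  next
    case True
    have "s i * bv (nxt ?D i) j = 0" using that cl1[OF True] nxt_lt[OF D, of i] by (auto simp: bv_def)
    moreover have "t (prv ?D i) * bv (prv ?D i) j = 0" using that cl2[OF True] prv_lt[OF D, of i] by (auto simp: bv_def)
    ultimately show ?thesis by auto
  qed
  have T1: "f i * (q ^ (2*i+1) * \<sigma> * s i * bv (nxt ?D i) j
      + q powi (1 - 2 * int i) * inverse \<sigma> * t (prv ?D i) * bv (prv ?D i) j) = 0"
    if "?D \<le> j \<or> j \<notin> S" for i j
  proof (cases "i \<in> S")
    case False then show ?thesis using fS by simp
  next
    case True
    have "s i * bv (nxt ?D i) j = 0" using that cl1[OF True] nxt_lt[OF D, of i] by (auto simp: bv_def)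
    moreover have "t (prv ?D i) * bv (prv ?D i) j = 0" using that cl2[OF True] prv_lt[OF D, of i] by (auto simp: bv_def)
    ultimately show ?thesis by auto
  qed
  show "rho0 q \<sigma> f \<in> WS (ordD q) S"
    unfolding WS_def Vsp_def rho0_def linext_def using T0 by (auto intro!: sum.neutral)
  show "rho1 q \<sigma> s t f \<in> WS (ordD q) S"
    unfolding WS_def Vsp_def rho1_def linext_def using T1 by (auto intro!: sum.neutral)
  show "rhoinf q s t f \<in> WS (ordD q) S"
    unfolding WS_def Vsp_def rhoinf_def linext_def using Tinf by (auto intro!: sum.neutral)
qed

lemma reducible_of_S:
  assumes D: "0 < ordD q"
    and cl1: "\<And>i. i\<in>S \<Longrightarrow> s i \<noteq> 0 \<Longrightarrow> nxt (ordD q) i \<in> S"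
    and cl2: "\<And>i. i\<in>S \<Longrightarrow> t (prv (ordD q) i) \<noteq> 0 \<Longrightarrow> prv (ordD q) i \<in> S"
    and a: "a \<in> S" "a < ordD q" and b: "b \<notin> S" "b < ordD q"
  shows "reducible_type0 q \<sigma> s t"
  unfolding reducible_type0_def
proof (intro exI conjI)
  let ?W = "WS (ordD q) S"
  show "lin_subspace ?W" unfolding lin_subspace_def WS_def Vsp_def by auto
  show "?W \<subseteq> Vsp (ordD q)" unfolding WS_def by auto
  have "bv a \<in> ?W" using a unfolding WS_def Vsp_def bv_def by auto
  moreover have "bv a \<noteq> (\<lambda>_. 0)" unfolding bv_def by (metis one_neq_zero)
  ultimately show "?W \<noteq> {\<lambda>_. 0}" by auto
  have "bv b \<in> Vsp (ordD q)" "bv b \<notin> ?W" using b unfolding WS_def Vsp_def bv_def by auto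
  then show "?W \<noteq> Vsp (ordD q)" by auto
  show "\<forall>f\<in>?W. rho0 q \<sigma> f \<in> ?W \<and> rho1 q \<sigma> s t f \<in> ?W \<and> rhoinf q s t f \<in> ?W"
    using WS_inv[OF D cl1 cl2] by blast
qed

lemma cycle_exit:
  assumes D: "0 < D" and i0: "i0 \<in> S" "i0 < D" and j0: "j0 < D" "j0 \<notin> S"
  shows "\<exists>k<D. k \<in> S \<and> nxt D k \<notin> S"
proof (rule ccontr)
  assume "\<not> ?thesis"
  then have cl: "\<And>k. k < D \<Longrightarrow> k \<in> S \<Longrightarrow> nxt D k \<in> S" by blast
  have "(i0 + m) mod D \<in> S" for m
  proof (induction m)
    case 0 then show ?case using i0 by simp
  next
    case (Suc m)
    have "nxt D ((i0 + m) mod D) \<in> S" using cl[OF _ Suc] D by simp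
    moreover have "nxt D ((i0 + m) mod D) = (i0 + Suc m) mod D"
      unfolding nxt_def by (simp add: mod_simps)
    ultimately show ?case by simp
  qed
  from this[of "j0 + D - i0"] have "(j0 + D) mod D \<in> S" using i0 by simp
  then show False using j0 by simp
qed

lemma part1_core:
  assumes D: "0 < ordD q" and ab: "a < ordD q" "b < ordD q" "a \<noteq> b" and st: "s a = 0" "t b = 0"
  shows "reducible_type0 q \<sigma> s t"
proof -
  define D where "D = ordD q"
  define c where "c = D - Suc b"
  define d where "d = (\<lambda>m. (m + c) mod D)"
  have D0: "0 < D" and a: "a < D" and b: "b < D" using D ab by (auto simp: D_def)
  have cD: "c < D" using D0 by (simp add: c_def)
  have dlt: "d m < D" for m using D0 by (simp add: d_def)
  have db: "d b = D - 1" unfolding d_def c_def using b by simp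
  have dinj: "i = j" if "i < D" "j < D" "d i = d j" for i j
  proof -
    have "(i+c) mod D = (if i + c < D then i + c else i + c - D)" using that cD by (intro mod2) auto
    moreover have "(j+c) mod D = (if j + c < D then j + c else j + c - D)" using that cD by (intro mod2) auto
    ultimately show ?thesis using that cD unfolding d_def by (auto split: if_splits)
  qed
  have dn: "d (nxt D i) = (d i + 1) mod D" for i
    unfolding d_def nxt_def by (simp add: mod_simps add_ac)
  have e: "x + D - 1 = x + (D - 1)" for x using D0 by simp
  have dp: "d (prv D i) = (d i + (D - 1)) mod D" for i
    unfolding d_def prv_def e by (simp add: mod_simps add_ac)
  have da: "d a < D - 1"
  proof -
    have "d a \<noteq> d b" using dinj a b ab(3) by blast
    then show ?thesis using dlt[of a] db by linarith
  qed
  define S where "S = {m. m < D \<and> d m \<le> d a}"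
  show ?thesis
  proof (rule reducible_of_S[OF D, of S s t a b])
    show "a \<in> S" using a by (simp add: S_def)
    show "b \<notin> S" using da db by (simp add: S_def)
    show "a < ordD q" "b < ordD q" using ab by auto
  next
    fix i assume i: "i \<in> S" and si: "s i \<noteq> 0"
    then have "i \<noteq> a" using st by auto
    then have "d i \<noteq> d a" using dinj i a by (auto simp: S_def)
    then have lt: "d i < d a" using i by (simp add: S_def)
    have "d (nxt D i) = d i + 1" using dn[of i] lt da by simp
    then show "nxt (ordD q) i \<in> S" using lt nxt_lt[OF D0, of i] by (simp add: S_def D_def[symmetric])
  next
    fix i assume i: "i \<in> S" and ti: "t (prv (ordD q) i) \<noteq> 0"
    then have pb: "prv D i \<noteq> b" using st by (auto simp: D_def)
    have pD: "prv D i < D" using prv_lt[OF D0] .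
    show "prv (ordD q) i \<in> S"
    proof (cases "d i = 0")
      case True
      then have "d (prv D i) = D - 1" using dp[of i] D0 by simp
      then have "prv D i = b" using dinj[OF pD b] db by simp
      then show ?thesis using pb by simp
    next
      case False
      have "(d i + (D - 1)) mod D = (if d i + (D - 1) < D then d i + (D - 1) else d i + (D - 1) - D)"
        using dlt[of i] by (intro mod2) auto
      then have "d (prv D i) = d i - 1" using dp[of i] False D0 by auto
      then show ?thesis using i pD by (auto simp: S_def D_def[symmetric])
    qed
  qed
qed

theorem mainTheorem9:
  fixes q \<sigma> w :: complex and s t :: "nat \<Rightarrow> complex"
  assumes "root_of_unity q" and "q ^ 4 \<noteq> 1"
    and "\<sigma> \<noteq> 0" and "general q \<sigma>"
    and "inE0 q \<sigma> w s t"
  shows "((\<Prod>i<ordD q. s i) = 0 \<and> (\<Prod>i<ordD q. t i) = 0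
           \<and> (\<exists>i<ordD q. \<exists>j<ordD q. i \<noteq> j \<and> rr q \<sigma> w i = 0 \<and> rr q \<sigma> w j = 0)
          \<longrightarrow> reducible_type0 q \<sigma> s t)
       \<and> (z0 q \<sigma> \<noteq> 2 \<and> z0 q \<sigma> \<noteq> -2 \<longrightarrow> reducible_type0 q \<sigma> s t \<longrightarrow>
           (\<Prod>i<ordD q. s i) = 0 \<and> (\<Prod>i<ordD q. t i) = 0
           \<and> (\<exists>i<ordD q. \<exists>j<ordD q. i \<noteq> j \<and> rr q \<sigma> w i = 0 \<and> rr q \<sigma> w j = 0))"
proof -
  note P = ordD_props[OF assms(1,2)]
  let ?D = "ordD q"
  have D0: "0 < ?D" and D3: "3 \<le> ?D" using P by auto
  have st: "s i * t i = rr q \<sigma> w i" if "i < ?D" for i using assms(5) that by (simp add: inE0_def)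
  show ?thesis
  proof (intro conjI impI)
    assume H: "(\<Prod>i<ordD q. s i) = 0 \<and> (\<Prod>i<ordD q. t i) = 0
           \<and> (\<exists>i<ordD q. \<exists>j<ordD q. i \<noteq> j \<and> rr q \<sigma> w i = 0 \<and> rr q \<sigma> w j = 0)"
    then obtain a where a: "a < ?D" "s a = 0" by (auto simp: prod_zero_iff)
    from H obtain b where b: "b < ?D" "t b = 0" by (auto simp: prod_zero_iff)
    from H obtain i j where ij: "i < ?D" "j < ?D" "i \<noteq> j" "rr q \<sigma> w i = 0" "rr q \<sigma> w j = 0" by blast
    show "reducible_type0 q \<sigma> s t"
    proof (cases "a = b")
      case False then show ?thesis using part1_core[where s=s and t=t and \<sigma>=\<sigma>, OF D0 a(1) b(1) False a(2) b(2)] by simp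
    next
      case True
      obtain k where k: "k < ?D" "k \<noteq> a" "s k * t k = 0"
        using ij st by (metis mult_eq_0_iff)
      show ?thesis
      proof (cases "s k = 0")
        case True
        then show ?thesis using part1_core[where s=s and t=t and \<sigma>=\<sigma>, OF D0 k(1) b(1) _ True b(2)] k(2) \<open>a = b\<close> by simp
      next
        case False
        then have "t k = 0" using k(3) by simp
        then show ?thesis using part1_core[where s=s and t=t and \<sigma>=\<sigma>, OF D0 a(1) k(1) _ a(2)] k(2) by simp
      qed
    qed
  next
    assume z: "z0 q \<sigma> \<noteq> 2 \<and> z0 q \<sigma> \<noteq> -2" and R: "reducible_type0 q \<sigma> s t"
    have dist: "\<forall>i<?D. \<forall>j<?D. lam q \<sigma> i = lam q \<sigma> j \<longrightarrow> i = j"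
      using lam_inj[OF P(1) assms(3) P(3), of i j for i j] P(4) z by (auto simp: z0_def)
    from R obtain W where ls: "lin_subspace W" and sub: "W \<subseteq> Vsp ?D"
      and n0: "W \<noteq> {\<lambda>_. 0}" and nV: "W \<noteq> Vsp ?D"
      and inv: "\<forall>f\<in>W. rho0 q \<sigma> f \<in> W \<and> rho1 q \<sigma> s t f \<in> W \<and> rhoinf q s t f \<in> W"
      unfolding reducible_type0_def by blast
    have inv0: "\<forall>f\<in>W. rho0 q \<sigma> f \<in> W" using inv by blast
    note sp = sep[OF ls sub inv0 _ dist]
    define S where "S = {i. i < ?D \<and> bv i \<in> W}"
    have "(\<lambda>_. 0) \<in> W" using ls by (simp add: lin_subspace_def)
    then obtain f where f: "f \<in> W" "f \<noteq> (\<lambda>_. 0)" using n0 by blast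
    then obtain i0 where "f i0 \<noteq> 0" by auto
    moreover then have "i0 < ?D" using f sub by (force simp: Vsp_def)
    ultimately have i0: "i0 \<in> S" "i0 < ?D" using sp[OF f(1)] by (auto simp: S_def)
    have "\<exists>j0<?D. j0 \<notin> S"
    proof (rule ccontr)
      assume "\<not> ?thesis"
      then have all: "\<forall>i\<in>{..<?D}. bv i \<in> W" by (auto simp: S_def)
      have "Vsp ?D \<subseteq> W"
      proof
        fix g assume "g \<in> Vsp ?D"
        then have "g = (\<lambda>m. \<Sum>i<?D. g i * bv i m)" by (rule Vsp_decomp)
        moreover have "(\<lambda>m. \<Sum>i<?D. g i * bv i m) \<in> W" by (rule ls_sum[OF ls _ all]) simp
        ultimately show "g \<in> W" by simp
      qed
      then show False using sub nV by blast
    qed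
    then obtain j0 where j0: "j0 < ?D" "j0 \<notin> S" by blast
    obtain k where k: "k < ?D" "k \<in> S" "nxt ?D k \<notin> S" using cycle_exit[OF D0 i0(1,2) j0] by blast
    obtain k' where k': "k' < ?D" "k' \<notin> S" "nxt ?D k' \<in> S"
    proof -
      have "\<exists>k<?D. k \<in> {..<?D} - S \<and> nxt ?D k \<notin> {..<?D} - S"
        using cycle_exit[OF D0, of j0 "{..<?D} - S" i0] j0 i0 by simp
      then show ?thesis using that nxt_lt[OF D0] by blast
    qed
    have sk: "s k = 0"
    proof (rule ccontr)
      assume sk: "s k \<noteq> 0"
      have "bv k \<in> W" using k by (simp add: S_def)
      then have h: "rhoinf q s t (bv k) \<in> W" using inv by blast
      have "rhoinf q s t (bv k) (nxt ?D k) = s k"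
        unfolding rhoinf_bv[OF k(1)] using nxt_ne_prv[OF D3 k(1)] by (simp add: bv_def)
      then have "bv (nxt ?D k) \<in> W" using sp[OF h nxt_lt[OF D0]] sk by simp
      then show False using k(3) nxt_lt[OF D0] by (simp add: S_def)
    qed
    define m where "m = nxt ?D k'"
    have m: "m < ?D" "m \<in> S" "prv ?D m = k'" using k' prv_nxt[OF D0 k'(1)] nxt_lt[OF D0] by (auto simp: m_def)
    have tk: "t k' = 0"
    proof (rule ccontr)
      assume tk: "t k' \<noteq> 0"
      have "bv m \<in> W" using m by (simp add: S_def)
      then have h: "rhoinf q s t (bv m) \<in> W" using inv by blast
      have "rhoinf q s t (bv m) (prv ?D m) = t k'"
        unfolding rhoinf_bv[OF m(1)] using nxt_ne_prv[OF D3 m(1)] m(3) by (simp add: bv_def)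
      then have "bv k' \<in> W" using sp[OF h] k'(1) tk m(3) by fastforce
      then show False using k' by (simp add: S_def)
    qed
    show "(\<Prod>i<ordD q. s i) = 0" using k(1) sk by (auto simp: prod_zero_iff)
    show "(\<Prod>i<ordD q. t i) = 0" using k'(1) tk by (auto simp: prod_zero_iff)
    show "\<exists>i<ordD q. \<exists>j<ordD q. i \<noteq> j \<and> rr q \<sigma> w i = 0 \<and> rr q \<sigma> w j = 0"
      using k k' sk tk st[of k] st[of k'] by (intro exI[of _ k] exI[of _ k']) auto
  qed
qed

end
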